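(* Let $\mathcal{D}$ be any distribution on $\mathbb{R}^m\times\{-1,+1\}$, let $p,q>0$ and $\epsilon_p,\epsilon_q\ge0$, and let $f(\mathbf{x})=\operatorname{sign}(\mathbf{w}^T\mathbf{x}+b)$ for some $\mathbf{w}\in\mathbb{R}^m$, $b\in\mathbb{R}$. Let $S_p(\mathbf{x})=\{\mathbf{x}+\mathbf{r}:\|\mathbf{r}\|_p\le\epsilon_p\}$, $S_q(\mathbf{x})=\{\mathbf{x}+\mathbf{r}:\|\mathbf{r}\|_q\le\epsilon_q\}$ and $S_{\mathrm{affine}}(\mathbf{x})=\{\mathbf{x}+\mathbf{r}_1+\mathbf{r}_2:\beta\in[0,1],\ \|\mathbf{r}_1\|_p\le\beta\epsilon_p,\ \|\mathbf{r}_2\|_q\le(1-\beta)\epsilon_q\}$. Then $$\mathcal{R}^{\mathrm{max}}_{\mathrm{adv}}(f;S_p,S_q)=\mathcal{R}_{\mathrm{adv}}(f;S_{\mathrm{affine}}).$$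
   Context: $\|\mathbf{r}\|_p=(\sum_i|r_i|^p)^{1/p}$ (for $p=\infty$, $\max_i|r_i|$). $\operatorname{sign}(t)=+1$ for $t\ge0$ and $-1$ for $t<0$. Adversarial risk: $\mathcal{R}_{\mathrm{adv}}(f;S)=\Pr_{(\mathbf{x},y)\sim\mathcal{D}}[\exists\,\mathbf{x}'\in S(\mathbf{x}): f(\mathbf{x}')\neq y]$; $\mathcal{R}^{\mathrm{max}}_{\mathrm{adv}}(f;S_p,S_q)=\mathcal{R}_{\mathrm{adv}}(f;S_p\cup S_q)$ with $(S_p\cup S_q)(\mathbf{x})=S_p(\mathbf{x})\cup S_q(\mathbf{x})$. *)

theory Defs
  imports "HOL-Probability.Probability"
begin

definition lp_norm :: "ereal \<Rightarrow> real ^ 'm \<Rightarrow> real" where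
  "lp_norm p r = (if p = \<infinity> then Max (range (\<lambda>i. \<bar>r $ i\<bar>))
                  else (\<Sum>i\<in>UNIV. \<bar>r $ i\<bar> powr real_of_ereal p) powr (1 / real_of_ereal p))"

definition sign_pm :: "real \<Rightarrow> real" where
  "sign_pm t = (if t \<ge> 0 then 1 else -1)"

definition linear_classifier :: "real ^ 'm \<Rightarrow> real \<Rightarrow> real ^ 'm \<Rightarrow> real" where
  "linear_classifier w b x = sign_pm (w \<bullet> x + b)"

definition lp_ball_set :: "ereal \<Rightarrow> real \<Rightarrow> real ^ 'm \<Rightarrow> (real ^ 'm) set" where
  "lp_ball_set p eps x = {x + r | r. lp_norm p r \<le> eps}"

definition affine_set :: "ereal \<Rightarrow> ereal \<Rightarrow> real \<Rightarrow> real \<Rightarrow> real ^ 'm \<Rightarrow> (real ^ 'm) set" where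
  "affine_set p q ep eq x = {x + r1 + r2 | \<beta> r1 r2. \<beta> \<in> {0..1} \<and>
      lp_norm p r1 \<le> \<beta> * ep \<and> lp_norm q r2 \<le> (1 - \<beta>) * eq}"

definition adv_risk :: "('a \<times> 'b) measure \<Rightarrow> ('a \<Rightarrow> 'b) \<Rightarrow> ('a \<Rightarrow> 'a set) \<Rightarrow> real" where
  "adv_risk D f S = measure D {z \<in> space D. \<exists>x'\<in>S (fst z). f x' \<noteq> snd z}"

definition adv_risk_max :: "('a \<times> 'b) measure \<Rightarrow> ('a \<Rightarrow> 'b) \<Rightarrow> ('a \<Rightarrow> 'a set) \<Rightarrow> ('a \<Rightarrow> 'a set) \<Rightarrow> real" where
  "adv_risk_max D f Sp Sq = adv_risk D f (\<lambda>x. Sp x \<union> Sq x)"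

end

theory Submission
  imports Defs
begin

lemma rp_pos: "p > 0 \<Longrightarrow> p \<noteq> \<infinity> \<Longrightarrow> real_of_ereal p > 0"
  by (cases p) auto

lemma lp_norm_zero: "lp_norm p 0 = 0"
  by (simp add: lp_norm_def)

lemma lp_norm_le0:
  assumes "p > 0" "lp_norm p r \<le> 0" shows "r = 0"
proof (cases "p = \<infinity>")
  case True
  have "\<And>i. \<bar>r $ i\<bar> \<le> 0"
  proof -
    fix i
    have "\<bar>r $ i\<bar> \<le> Max (range (\<lambda>i. \<bar>r $ i\<bar>))" by (rule Max_ge) auto
    thus "\<bar>r $ i\<bar> \<le> 0" using assms(2) True by (simp add: lp_norm_def)
  qed
  thus ?thesis by (simp add: vec_eq_iff)
next
  case False
  define S where "S = (\<Sum>i\<in>UNIV. \<bar>r $ i\<bar> powr real_of_ereal p)"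
  have "S powr (1 / real_of_ereal p) \<le> 0" using assms(2) False by (simp add: lp_norm_def S_def)
  hence "S powr (1 / real_of_ereal p) = 0" by (smt (verit) powr_ge_zero)
  hence "S = 0" by simp
  hence "\<forall>i\<in>UNIV. \<bar>r $ i\<bar> powr real_of_ereal p = 0" unfolding S_def
    by (subst sum_nonneg_eq_0_iff[symmetric]) auto
  thus ?thesis by (simp add: vec_eq_iff)
qed

lemma lp_norm_scale:
  assumes "p > 0" "c > 0" shows "lp_norm p (c *\<^sub>R r) = c * lp_norm p r"
proof (cases "p = \<infinity>")
  case True
  have m: "mono ((*) c)" using assms(2) by (auto intro!: monoI mult_left_mono)
  have "range (\<lambda>i. \<bar>(c *\<^sub>R r) $ i\<bar>) = (*) c ` range (\<lambda>i. \<bar>r $ i\<bar>)"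
    using assms(2) by (auto simp: abs_mult image_image)
  moreover have "c * Max (range (\<lambda>i. \<bar>r $ i\<bar>)) = Max ((*) c ` range (\<lambda>i. \<bar>r $ i\<bar>))"
    by (rule mono_Max_commute[OF m]) auto
  ultimately show ?thesis using True by (simp add: lp_norm_def)
next
  case False
  define t where "t = real_of_ereal p"
  have t: "t > 0" using rp_pos[OF assms(1) False] t_def by simp
  have "(\<Sum>i\<in>UNIV. \<bar>(c *\<^sub>R r) $ i\<bar> powr t) = c powr t * (\<Sum>i\<in>UNIV. \<bar>r $ i\<bar> powr t)"
    using assms(2) by (simp add: abs_mult powr_mult sum_distrib_left)
  hence "(\<Sum>i\<in>UNIV. \<bar>(c *\<^sub>R r) $ i\<bar> powr t) powr (1/t)
      = (c powr t) powr (1/t) * (\<Sum>i\<in>UNIV. \<bar>r $ i\<bar> powr t) powr (1/t)"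
    by (simp add: powr_mult sum_nonneg)
  also have "(c powr t) powr (1/t) = c" using t assms(2) by (simp add: powr_powr)
  finally show ?thesis using False by (simp add: lp_norm_def t_def)
qed

lemma key:
  fixes w x :: "real ^ 'm::finite"
  assumes "p > 0" "q > 0" "ep \<ge> 0" "eq \<ge> 0"
  shows "(\<exists>x'\<in>lp_ball_set p ep x \<union> lp_ball_set q eq x. linear_classifier w b x' \<noteq> y)
     \<longleftrightarrow> (\<exists>x'\<in>affine_set p q ep eq x. linear_classifier w b x' \<noteq> y)"
proof
  assume "\<exists>x'\<in>lp_ball_set p ep x \<union> lp_ball_set q eq x. linear_classifier w b x' \<noteq> y"
  moreover have "lp_ball_set p ep x \<subseteq> affine_set p q ep eq x"
  proof
    fix z assume "z \<in> lp_ball_set p ep x"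
    then obtain r where "z = x + r" "lp_norm p r \<le> ep" by (auto simp: lp_ball_set_def)
    thus "z \<in> affine_set p q ep eq x" unfolding affine_set_def
      by (intro CollectI exI[of _ 1] exI[of _ r] exI[of _ 0]) (auto simp: lp_norm_zero)
  qed
  moreover have "lp_ball_set q eq x \<subseteq> affine_set p q ep eq x"
  proof
    fix z assume "z \<in> lp_ball_set q eq x"
    then obtain r where "z = x + r" "lp_norm q r \<le> eq" by (auto simp: lp_ball_set_def)
    thus "z \<in> affine_set p q ep eq x" unfolding affine_set_def
      by (intro CollectI exI[of _ 0] exI[of _ 0] exI[of _ r]) (auto simp: lp_norm_zero)
  qed
  ultimately show "\<exists>x'\<in>affine_set p q ep eq x. linear_classifier w b x' \<noteq> y" by blast
next
  assume "\<exists>x'\<in>affine_set p q ep eq x. linear_classifier w b x' \<noteq> y"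
  then obtain \<beta> r1 r2 where B: "\<beta> \<in> {0..1}" "lp_norm p r1 \<le> \<beta> * ep" "lp_norm q r2 \<le> (1 - \<beta>) * eq"
    and bad: "linear_classifier w b (x + r1 + r2) \<noteq> y"
    by (auto simp: affine_set_def)
  show "\<exists>x'\<in>lp_ball_set p ep x \<union> lp_ball_set q eq x. linear_classifier w b x' \<noteq> y"
  proof (cases "\<beta> = 0")
    case True
    hence "r1 = 0" using B lp_norm_le0[OF assms(1)] by simp
    moreover have "x + r2 \<in> lp_ball_set q eq x" using B True by (auto simp: lp_ball_set_def)
    ultimately show ?thesis using bad by auto
  next
    case b0: False
    show ?thesis
    proof (cases "\<beta> = 1")
      case True
      hence "r2 = 0" using B lp_norm_le0[OF assms(2)] by simp
      moreover have "x + r1 \<in> lp_ball_set p ep x" using B True by (auto simp: lp_ball_set_def)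
      ultimately show ?thesis using bad by auto
    next
      case b1: False
      have bp: "\<beta> > 0" "1 - \<beta> > 0" using B b0 b1 by auto
      define u where "u = x + (1/\<beta>) *\<^sub>R r1"
      define v where "v = x + (1/(1-\<beta>)) *\<^sub>R r2"
      have "lp_norm p ((1/\<beta>) *\<^sub>R r1) = (1/\<beta>) * lp_norm p r1"
        using lp_norm_scale[OF assms(1), of "1/\<beta>" r1] bp by simp
      also have "\<dots> \<le> (1/\<beta>) * (\<beta> * ep)" using B bp by (intro mult_left_mono) auto
      also have "\<dots> = ep" using bp by simp
      finally have uS: "u \<in> lp_ball_set p ep x" unfolding u_def lp_ball_set_def by blast
      have "lp_norm q ((1/(1-\<beta>)) *\<^sub>R r2) = (1/(1-\<beta>)) * lp_norm q r2"
        using lp_norm_scale[OF assms(2), of "1/(1-\<beta>)" r2] bp by simp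
      also have "\<dots> \<le> (1/(1-\<beta>)) * ((1-\<beta>) * eq)" using B bp by (intro mult_left_mono) auto
      also have "\<dots> = eq" using bp by simp
      finally have vS: "v \<in> lp_ball_set q eq x" unfolding v_def lp_ball_set_def by blast
      have eq: "w \<bullet> (x + r1 + r2) + b = \<beta> * (w \<bullet> u + b) + (1-\<beta>) * (w \<bullet> v + b)"
        using bp unfolding u_def v_def by (simp add: inner_add_right field_simps)
      show ?thesis
      proof (rule ccontr)
        assume "\<not> ?thesis"
        hence "linear_classifier w b u = y" "linear_classifier w b v = y" using uS vS by auto
        hence U: "sign_pm (w \<bullet> u + b) = y" and V: "sign_pm (w \<bullet> v + b) = y"
          by (auto simp: linear_classifier_def)
        have "sign_pm (w \<bullet> (x + r1 + r2) + b) = y"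
        proof (cases "y = 1")
          case True
          hence "w \<bullet> u + b \<ge> 0" "w \<bullet> v + b \<ge> 0" using U V by (auto simp: sign_pm_def split: if_splits)
          hence "w \<bullet> (x + r1 + r2) + b \<ge> 0" unfolding eq using bp by simp
          thus ?thesis using True by (simp add: sign_pm_def)
        next
          case False
          hence "w \<bullet> u + b < 0" "w \<bullet> v + b < 0" "y = -1" using U V by (auto simp: sign_pm_def split: if_splits)
          hence "w \<bullet> (x + r1 + r2) + b < 0" unfolding eq using bp
            by (smt (verit) mult_pos_neg)
          thus ?thesis using \<open>y = -1\<close> by (simp add: sign_pm_def)
        qed
        thus False using bad by (simp add: linear_classifier_def)
      qed
    qed
  qed
qed

theorem claim3:
  fixes D :: "((real ^ 'm::finite) \<times> real) measure"
    and p q :: ereal and ep eq b :: real and w :: "real ^ 'm"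
  assumes "prob_space D"
    and "sets D = sets borel"
    and "AE z in D. snd z \<in> {-1, 1}"
    and "p > 0" and "q > 0"
    and "ep \<ge> 0" and "eq \<ge> 0"
  shows "adv_risk_max D (linear_classifier w b) (lp_ball_set p ep) (lp_ball_set q eq)
       = adv_risk D (linear_classifier w b) (affine_set p q ep eq)"
  unfolding adv_risk_max_def adv_risk_def
  using key[OF assms(4-7), where w=w and b=b] by (intro arg_cong[where f="measure D"] Collect_cong) simp

end
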